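(* Let $X$ be a non-empty set, $R$ a binary relation on $X$, and $\tau$ a compact topology on $X$. Suppose $R$ is upper tc-semicontinuous with respect to $\tau$. Then there exists a non-empty $w$-stable set of $(X,R)$.
   Context: For a binary relation $R$ on $X$, the transitive closure $\overline{R}$ is defined by: $x\overline{R}y$ iff there exist $K\ge 1$ and $x_0,\dots,x_K\in X$ with $x_0=x$, $x_K=y$, and $x_{k-1}Rx_k$ for all $k\in\{1,\dots,K\}$. A set $F\subseteq X$ is a $w$-stable set of $(X,R)$ if (i) (internal stability) for all distinct $x,y\in F$, $(x,y)\notin\overline{R}$; and (ii) (external stability) for all $x\in F$ and $y\in X\setminus F$, if $y\overline{R}x$ then $x\overline{R}y$. $R$ is upper tc-semicontinuous with respect to $\tau$ if for every $x\in X$ the set $\{y\in X: x\overline{R}y\}$ is open in $\tau$. A topology is compact if every open cover of $X$ has a finite subcover. *)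

theory Defs
  imports "HOL-Analysis.Analysis"
begin

definition w_stable :: "'a set \<Rightarrow> ('a \<times> 'a) set \<Rightarrow> 'a set \<Rightarrow> bool" where
  "w_stable X R F \<longleftrightarrow> F \<subseteq> X \<and>
     (\<forall>x\<in>F. \<forall>y\<in>F. x \<noteq> y \<longrightarrow> (x, y) \<notin> R\<^sup>+) \<and>
     (\<forall>x\<in>F. \<forall>y\<in>X - F. (y, x) \<in> R\<^sup>+ \<longrightarrow> (x, y) \<in> R\<^sup>+)"

definition upper_tc_semicontinuous :: "'a topology \<Rightarrow> ('a \<times> 'a) set \<Rightarrow> bool" where
  "upper_tc_semicontinuous T R \<longleftrightarrow>
     (\<forall>x\<in>topspace T. openin T {y \<in> topspace T. (x, y) \<in> R\<^sup>+})"

end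

theory Submission
  imports Defs
begin

theorem lemma1:
  fixes X :: "'a set" and R :: "('a \<times> 'a) set" and T :: "'a topology"
  assumes "X \<noteq> {}"
    and "R \<subseteq> X \<times> X"
    and "topspace T = X"
    and "compact_space T"
    and "upper_tc_semicontinuous T R"
  shows "\<exists>F. F \<noteq> {} \<and> w_stable X R F"
proof -
  let ?P = "R\<^sup>+"
  have PX: "(a, b) \<in> ?P \<Longrightarrow> a \<in> X \<and> b \<in> X" for a b
    using assms(2) by (metis mem_Sigma_iff subsetD trancl_subset_Sigma)
  have "\<exists>x\<in>X. \<forall>y. (y, x) \<in> ?P \<longrightarrow> (x, y) \<in> ?P"
  proof (rule ccontr)
    assume H: "\<not> ?thesis"
    define U where "U y = {z \<in> X. (y, z) \<in> ?P}" for y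
    have op: "\<forall>u\<in>U ` X. openin T u"
      using assms(3,5) unfolding upper_tc_semicontinuous_def U_def by auto
    have cov: "topspace T \<subseteq> \<Union>(U ` X)"
    proof
      fix x assume "x \<in> topspace T"
      then have "x \<in> X" using assms(3) by simp
      with H obtain y where "(y, x) \<in> ?P" by blast
      then show "x \<in> \<Union>(U ` X)" using PX unfolding U_def by blast
    qed
    obtain \<F> where F: "finite \<F>" "\<F> \<subseteq> U ` X" "topspace T \<subseteq> \<Union>\<F>"
      using assms(4) op cov unfolding compact_space_alt by meson
    obtain S where S: "S \<subseteq> X" "finite S" "\<F> = U ` S"
      using finite_subset_image[OF F(1,2)] by blast
    have covS: "X \<subseteq> (\<Union>y\<in>S. U y)" using F(3) S(3) assms(3) by simp
    have "S \<noteq> {}" using covS assms(1) by auto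
    define Q where "Q = {(a, b). a \<in> S \<and> b \<in> S \<and> (a, b) \<in> ?P \<and> (b, a) \<notin> ?P}"
    have finQ: "finite Q"
      by (rule finite_subset[of _ "S \<times> S"]) (auto simp: Q_def S(2))
    have transQ: "trans Q"
    proof (rule transI)
      fix a b c assume "(a, b) \<in> Q" "(b, c) \<in> Q"
      then have h: "a \<in> S" "c \<in> S" "(a, b) \<in> ?P" "(b, c) \<in> ?P" "(c, b) \<notin> ?P"
        unfolding Q_def by auto
      have "(a, c) \<in> ?P" using h(3,4) by (rule trancl_trans)
      moreover have "(c, a) \<notin> ?P"
      proof
        assume "(c, a) \<in> ?P"
        then have "(c, b) \<in> ?P" using h(3) by (rule trancl_trans)
        with h(5) show False by simp
      qed
      ultimately show "(a, c) \<in> Q" unfolding Q_def using h(1,2) by simp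
    qed
    have "acyclic Q"
      unfolding acyclic_def using trancl_id[OF transQ] by (auto simp: Q_def)
    then have wfQ: "wf Q" using finite_acyclic_wf finQ by blast
    obtain y where y: "y \<in> S" "\<And>z. (z, y) \<in> Q \<Longrightarrow> z \<notin> S"
      using wfE_min'[OF wfQ \<open>S \<noteq> {}\<close>] by blast
    have "y \<in> X" using y(1) S(1) by blast
    with H obtain z where z: "(z, y) \<in> ?P" "(y, z) \<notin> ?P" by blast
    have "z \<in> X" using PX z(1) by blast
    with covS obtain k where k: "k \<in> S" "(k, z) \<in> ?P" unfolding U_def by blast
    have "(k, y) \<in> ?P" using k(2) z(1) by (meson trancl_trans)
    then have "(y, k) \<in> ?P" using y k(1) unfolding Q_def by blast
    then have "(y, z) \<in> ?P" using k(2) by (meson trancl_trans)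
    with z(2) show False by blast
  qed
  then obtain x where x: "x \<in> X" "\<forall>y. (y, x) \<in> ?P \<longrightarrow> (x, y) \<in> ?P" by blast
  have "w_stable X R {x}" unfolding w_stable_def using x by auto
  then show ?thesis by blast
qed

end
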